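(* Let $G=(S,T,\pi)$ be a two-person win-lose game, with representing matrix $M_G=(\pi(s,t))_{s\in S,t\in T}$. Assume $M_G$ satisfies at least one of: (1) all but finitely many rows contain finitely many $0$ entries; (2) there is a finite $N$ such that all but finitely many rows contain at most $N$ entries equal to $1$; (3) there is a finite $N$ such that all but finitely many columns contain at most $N$ entries equal to $0$; (4) all but finitely many columns contain finitely many $1$ entries. Then $G$ is totally minimax.
   Context: A two-person win-lose game is $G=(S,T,\pi)$ with non-empty sets $S,T$ (arbitrary cardinality) and $\pi:S\times T\to\{0,1\}$; rows of $M_G$ are indexed by $S$ and columns by $T$. $\Delta(X)$ is the set of probability distributions on $X$ with at most countable support; $\pi^{\mathrm{mix}}(\mathbf{p},\mathbf{q})=\sum p_sq_t\pi(s,t)$. A game has the minimax property if $\sup_{\mathbf{p}\in\Delta(S)}\inf_{\mathbf{q}\in\Delta(T)}\pi^{\mathrm{mix}}(\mathbf{p},\mathbf{q})=\inf_{\mathbf{q}\in\Delta(T)}\sup_{\mathbf{p}\in\Delta(S)}\pi^{\mathrm{mix}}(\mathbf{p},\mathbf{q})$. $G$ is totally minimax if every subgame $(S',T',\pi|_{S'\times T'})$ with non-empty $S'\subseteq S$, $T'\subseteq T$ has the minimax property. *)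

theory Defs
  imports "HOL-Analysis.Analysis"
begin

definition distr :: "'a set \<Rightarrow> ('a \<Rightarrow> real) \<Rightarrow> bool" where
  "distr X p \<longleftrightarrow> (\<forall>x. 0 \<le> p x) \<and> (\<forall>x. x \<notin> X \<longrightarrow> p x = 0)
     \<and> countable {x. p x \<noteq> 0} \<and> (p has_sum 1) X"

definition mixpay :: "'s set \<Rightarrow> 't set \<Rightarrow> ('s \<Rightarrow> 't \<Rightarrow> bool) \<Rightarrow> ('s \<Rightarrow> real) \<Rightarrow> ('t \<Rightarrow> real) \<Rightarrow> real" where
  "mixpay S T \<pi> p q = (\<Sum>\<^sub>\<infinity>(s,t)\<in>S \<times> T. p s * q t * of_bool (\<pi> s t))"

definition minimax_property :: "'s set \<Rightarrow> 't set \<Rightarrow> ('s \<Rightarrow> 't \<Rightarrow> bool) \<Rightarrow> bool" where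
  "minimax_property S T \<pi> \<longleftrightarrow>
     (SUP p\<in>{p. distr S p}. INF q\<in>{q. distr T q}. mixpay S T \<pi> p q)
   = (INF q\<in>{q. distr T q}. SUP p\<in>{p. distr S p}. mixpay S T \<pi> p q)"

definition totally_minimax :: "'s set \<Rightarrow> 't set \<Rightarrow> ('s \<Rightarrow> 't \<Rightarrow> bool) \<Rightarrow> bool" where
  "totally_minimax S T \<pi> \<longleftrightarrow>
     (\<forall>S' T'. S' \<subseteq> S \<longrightarrow> T' \<subseteq> T \<longrightarrow> S' \<noteq> {} \<longrightarrow> T' \<noteq> {} \<longrightarrow> minimax_property S' T' \<pi>)"

end

theory Submission
  imports Defs
begin


definition fdist :: "'a set \<Rightarrow> ('a \<Rightarrow> real) \<Rightarrow> bool" where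
  "fdist A p \<longleftrightarrow> finite A \<and> (\<forall>x. 0 \<le> p x) \<and> (\<forall>x. x \<notin> A \<longrightarrow> p x = 0) \<and> sum p A = 1"

lemma fdist_distr:
  assumes "fdist A p" "A \<subseteq> S" shows "distr S p"
proof -
  have fin: "finite A" and nn: "\<And>x. 0 \<le> p x" and z: "\<And>x. x \<notin> A \<Longrightarrow> p x = 0"
    and s1: "sum p A = 1"
    using assms(1) unfolding fdist_def by auto
  have sub: "{x. p x \<noteq> 0} \<subseteq> A" using z by blast
  have c: "countable {x. p x \<noteq> 0}" by (rule countable_finite[OF finite_subset[OF sub fin]])
  have "(p has_sum sum p A) A" using fin by (rule has_sum_finite)
  hence hA: "(p has_sum 1) A" by (simp only: s1)
  have hS: "(p has_sum 1) S"
  proof (subst has_sum_cong_neutral[where T=A and g=p])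
    show "(p has_sum 1) A" by (rule hA)
  qed (use z assms(2) in auto)
  have z2: "\<forall>x. x \<notin> S \<longrightarrow> p x = 0" using z assms(2) by blast
  show ?thesis unfolding distr_def using nn z2 c hS by blast
qed

lemma has_sum_sum_fin:
  fixes f :: "'i \<Rightarrow> 'a \<Rightarrow> real"
  assumes "finite I" "\<And>i. i \<in> I \<Longrightarrow> (f i has_sum a i) X"
  shows "((\<lambda>x. \<Sum>i\<in>I. f i x) has_sum (\<Sum>i\<in>I. a i)) X"
  using assms by (induction I rule: finite_induct) (auto intro: has_sum_add)

lemma distr_summ:
  assumes "distr T q" "\<And>t. t \<in> T \<Longrightarrow> 0 \<le> c t \<and> c t \<le> 1"
  shows "((\<lambda>t. q t * c t) has_sum infsum (\<lambda>t. q t * c t) T) T"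
proof -
  have "q summable_on T" using assms unfolding distr_def by (auto simp: has_sum_iff)
  hence "(\<lambda>t. q t * c t) summable_on T"
    by (rule summable_on_comparison_test)
       (use assms in \<open>auto simp: distr_def intro: mult_left_le mult_nonneg_nonneg\<close>)
  thus ?thesis by simp
qed

lemma mixpay_hassum:
  assumes "distr T q" "finite A" "A \<subseteq> S" "\<And>s. s \<notin> A \<Longrightarrow> p s = 0"
  shows "((\<lambda>t. q t * (\<Sum>s\<in>A. p s * of_bool (\<pi> s t))) has_sum mixpay S T \<pi> p q) T"
proof -
  define Y where "Y s = infsum (\<lambda>t. q t * of_bool (\<pi> s t)) T" for s
  have sumY: "((\<lambda>t. q t * of_bool (\<pi> s t)) has_sum Y s) T" for s
    unfolding Y_def by (rule distr_summ[OF assms(1)]) auto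
  define g where "g s0 z = (if s0 = fst z then p s0 * q (snd z) * of_bool (\<pi> s0 (snd z)) else 0)" for s0 z
  have 1: "(g s0 has_sum (p s0 * Y s0)) (S \<times> T)" if "s0 \<in> A" for s0
  proof -
    have "(g s0 \<circ> Pair s0) = (\<lambda>t. p s0 * (q t * of_bool (\<pi> s0 t)))"
      by (auto simp: g_def fun_eq_iff)
    hence "(g s0 has_sum (p s0 * Y s0)) (Pair s0 ` T)"
      by (subst has_sum_reindex) (auto intro: inj_onI has_sum_cmult_right sumY)
    thus ?thesis using that assms(3)
      by (subst has_sum_cong_neutral[where T="Pair s0 ` T"]) (auto simp: g_def)
  qed
  have 2: "((\<lambda>z. \<Sum>s0\<in>A. g s0 z) has_sum (\<Sum>s0\<in>A. p s0 * Y s0)) (S \<times> T)"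
    by (rule has_sum_sum_fin) (use assms 1 in auto)
  have 3: "(\<lambda>z. \<Sum>s0\<in>A. g s0 z) = (\<lambda>(s,t). p s * q t * of_bool (\<pi> s t))"
    using assms(2,4) by (auto simp: fun_eq_iff g_def sum.delta)
  have m: "mixpay S T \<pi> p q = (\<Sum>s0\<in>A. p s0 * Y s0)"
    using 2 unfolding 3 mixpay_def by (rule infsumI)
  have 4: "((\<lambda>t. \<Sum>s\<in>A. p s * (q t * of_bool (\<pi> s t))) has_sum (\<Sum>s0\<in>A. p s0 * Y s0)) T"
    by (rule has_sum_sum_fin) (use assms in \<open>auto intro: has_sum_cmult_right sumY\<close>)
  have 5: "(\<lambda>t. \<Sum>s\<in>A. p s * (q t * of_bool (\<pi> s t))) = (\<lambda>t. q t * (\<Sum>s\<in>A. p s * of_bool (\<pi> s t)))"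
    by (auto simp: fun_eq_iff sum_distrib_left mult_ac)
  show ?thesis using 4 unfolding 5 m .
qed

lemma mixpay_ge:
  assumes "distr T q" "finite A" "A \<subseteq> S" "\<And>s. s \<notin> A \<Longrightarrow> p s = 0"
    "\<And>t. t \<in> T \<Longrightarrow> x \<le> (\<Sum>s\<in>A. p s * of_bool (\<pi> s t))"
  shows "x \<le> mixpay S T \<pi> p q"
proof -
  have "(q has_sum 1) T" using assms(1) by (simp add: distr_def)
  hence "((\<lambda>t. q t * x) has_sum (1 * x)) T" by (rule has_sum_cmult_left)
  hence "1 * x \<le> mixpay S T \<pi> p q"
    using mixpay_hassum[OF assms(1-4), where \<pi>=\<pi>]
    by (rule has_sum_mono) (use assms in \<open>auto simp: distr_def intro: mult_left_mono\<close>)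
  thus ?thesis by simp
qed

lemma mixpay_le:
  assumes "distr T q" "finite A" "A \<subseteq> S" "\<And>s. s \<notin> A \<Longrightarrow> p s = 0"
    "\<And>t. t \<in> T \<Longrightarrow> (\<Sum>s\<in>A. p s * of_bool (\<pi> s t)) \<le> x"
  shows "mixpay S T \<pi> p q \<le> x"
proof -
  have "(q has_sum 1) T" using assms(1) by (simp add: distr_def)
  hence "((\<lambda>t. q t * x) has_sum (1 * x)) T" by (rule has_sum_cmult_left)
  with mixpay_hassum[OF assms(1-4), where \<pi>=\<pi>] have "mixpay S T \<pi> p q \<le> 1 * x"
    by (rule has_sum_mono) (use assms in \<open>auto simp: distr_def intro: mult_left_mono\<close>)
  thus ?thesis by simp
qed

lemma mixpay_swap: "mixpay S T \<pi> p q = mixpay T S (\<lambda>t s. \<pi> s t) q p"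
proof -
  have b: "bij_betw prod.swap (T \<times> S) (S \<times> T)"
    by (auto simp: bij_betw_def intro: inj_onI)
  show ?thesis unfolding mixpay_def
    by (subst infsum_reindex_bij_betw[OF b, symmetric]) (auto simp: mult_ac case_prod_unfold)
qed

lemma mixpay_nonneg:
  assumes "distr S p" "distr T q" shows "0 \<le> mixpay S T \<pi> p q"
  unfolding mixpay_def using assms by (intro infsum_nonneg) (auto simp: distr_def)

lemma distr_partial:
  assumes "distr S p" "finite F" "F \<subseteq> S" shows "sum p F \<le> 1"
  using assms by (intro finite_sum_le_has_sum[where f=p and S=1 and A=S]) (auto simp: distr_def)

lemma mixpay_le1:
  assumes "distr S p" "distr T q" shows "mixpay S T \<pi> p q \<le> 1"
proof -
  let ?f = "\<lambda>(s,t). p s * q t * of_bool (\<pi> s t)"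
  have fs: "sum ?f F \<le> 1" if "finite F" "F \<subseteq> S \<times> T" for F
  proof -
    have "sum ?f F \<le> sum (\<lambda>(s,t). p s * q t) F"
      using that assms
      by (intro sum_mono) (auto simp: distr_def case_prod_unfold intro!: mult_nonneg_nonneg)
    also have "\<dots> \<le> sum (\<lambda>(s,t). p s * q t) (fst ` F \<times> snd ` F)"
      using that assms
      by (intro sum_mono2) (auto simp: distr_def case_prod_unfold intro!: mult_nonneg_nonneg
            intro: rev_image_eqI)
    also have "\<dots> = sum p (fst ` F) * sum q (snd ` F)"
      by (simp add: sum_product sum.cartesian_product)
    also have "\<dots> \<le> 1 * 1"
    proof (rule mult_mono)
      show "sum p (fst ` F) \<le> 1" by (rule distr_partial[OF assms(1)]) (use that in auto)
      show "sum q (snd ` F) \<le> 1" by (rule distr_partial[OF assms(2)]) (use that in auto)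
      show "0 \<le> sum q (snd ` F)" using assms(2) by (auto simp: distr_def intro: sum_nonneg)
    qed simp
    finally show ?thesis by simp
  qed
  have nn: "\<And>z. z \<in> S \<times> T \<Longrightarrow> 0 \<le> ?f z" using assms by (auto simp: distr_def)
  have "?f summable_on (S \<times> T)"
    by (rule nonneg_bdd_above_summable_on[OF nn]) (use fs in \<open>auto intro!: bdd_aboveI\<close>)
  thus ?thesis unfolding mixpay_def by (rule infsum_le_finite_sums) (use fs in auto)
qed



definition approx_saddle :: "'s set \<Rightarrow> 't set \<Rightarrow> ('s \<Rightarrow> 't \<Rightarrow> bool) \<Rightarrow> bool" where
  "approx_saddle S T \<pi> \<longleftrightarrow> (\<forall>\<epsilon>>0. \<exists>A p B q x. A \<subseteq> S \<and> fdist A p \<and> B \<subseteq> T \<and> fdist B q \<and>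
     (\<forall>t\<in>T. x \<le> (\<Sum>s\<in>A. p s * of_bool (\<pi> s t))) \<and>
     (\<forall>s\<in>S. (\<Sum>t\<in>B. q t * of_bool (\<pi> s t)) \<le> x + \<epsilon>))"

lemma bridge:
  assumes "approx_saddle S T \<pi>"
  shows "minimax_property S T \<pi>"
proof -
  let ?P = "{p. distr S p}" and ?Q = "{q. distr T q}"
  let ?M = "mixpay S T \<pi>"
  obtain A0 p0 B0 q0 x0 where "A0 \<subseteq> S" "fdist A0 p0" "B0 \<subseteq> T" "fdist B0 q0"
    using assms[unfolded approx_saddle_def, rule_format, OF zero_less_one] by blast
  hence p0: "p0 \<in> ?P" and q0: "q0 \<in> ?Q" by (auto intro: fdist_distr)
  have bb: "bdd_below (?M p ` ?Q)" if "p \<in> ?P" for p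
    using that by (intro bdd_belowI[of _ 0]) (auto intro: mixpay_nonneg)
  have ba: "bdd_above ((\<lambda>p. ?M p q) ` ?P)" if "q \<in> ?Q" for q
    using that by (intro bdd_aboveI[of _ 1]) (auto intro: mixpay_le1)
  define L where "L = (SUP p\<in>?P. INF q\<in>?Q. ?M p q)"
  define U where "U = (INF q\<in>?Q. SUP p\<in>?P. ?M p q)"
  have baL: "bdd_above ((\<lambda>p. INF q\<in>?Q. ?M p q) ` ?P)"
  proof (intro bdd_aboveI[of _ 1])
    fix y assume "y \<in> (\<lambda>p. INF q\<in>?Q. ?M p q) ` ?P"
    then obtain p where p: "p \<in> ?P" and y: "y = (INF q\<in>?Q. ?M p q)" by auto
    have "y \<le> ?M p q0" unfolding y by (rule cINF_lower[OF bb[OF p] q0])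
    also have "\<dots> \<le> 1" using p q0 by (auto intro: mixpay_le1)
    finally show "y \<le> 1" .
  qed
  have bbU: "bdd_below ((\<lambda>q. SUP p\<in>?P. ?M p q) ` ?Q)"
  proof (intro bdd_belowI[of _ 0])
    fix y assume "y \<in> (\<lambda>q. SUP p\<in>?P. ?M p q) ` ?Q"
    then obtain q where q: "q \<in> ?Q" and y: "y = (SUP p\<in>?P. ?M p q)" by auto
    have "0 \<le> ?M p0 q" using p0 q by (auto intro: mixpay_nonneg)
    also have "\<dots> \<le> y" unfolding y by (rule cSUP_upper[OF p0 ba[OF q]])
    finally show "0 \<le> y" .
  qed
  have LU: "L \<le> U"
    unfolding U_def
  proof (rule cINF_greatest)
    show "?Q \<noteq> {}" using q0 by auto
    fix q assume q: "q \<in> ?Q"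
    show "L \<le> (SUP p\<in>?P. ?M p q)" unfolding L_def
    proof (rule cSUP_least)
      show "?P \<noteq> {}" using p0 by auto
      fix p assume p: "p \<in> ?P"
      have "(INF q\<in>?Q. ?M p q) \<le> ?M p q" by (rule cINF_lower[OF bb[OF p] q])
      also have "\<dots> \<le> (SUP p\<in>?P. ?M p q)" by (rule cSUP_upper[OF p ba[OF q]])
      finally show "(INF q\<in>?Q. ?M p q) \<le> (SUP p\<in>?P. ?M p q)" .
    qed
  qed
  have UL: "U \<le> L + \<epsilon>" if eps: "\<epsilon> > 0" for \<epsilon>
  proof -
    obtain A p B q x where AB: "A \<subseteq> S" "fdist A p" "B \<subseteq> T" "fdist B q"
      and lo: "\<forall>t\<in>T. x \<le> (\<Sum>s\<in>A. p s * of_bool (\<pi> s t))"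
      and up: "\<forall>s\<in>S. (\<Sum>t\<in>B. q t * of_bool (\<pi> s t)) \<le> x + \<epsilon>"
      using assms[unfolded approx_saddle_def, rule_format, OF eps] by blast
    have p: "p \<in> ?P" and q: "q \<in> ?Q" using AB by (auto intro: fdist_distr)
    have "x \<le> (INF q\<in>?Q. ?M p q)"
    proof (rule cINF_greatest)
      show "?Q \<noteq> {}" using q0 by auto
      fix q' assume "q' \<in> ?Q"
      thus "x \<le> ?M p q'"
        by (intro mixpay_ge[of T q' A S p]) (use AB lo in \<open>auto simp: fdist_def\<close>)
    qed
    also have "\<dots> \<le> L" unfolding L_def by (rule cSUP_upper[OF p baL])
    finally have xL: "x \<le> L" .
    have "U \<le> (SUP p\<in>?P. ?M p q)" unfolding U_def by (rule cINF_lower[OF bbU q])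
    also have "\<dots> \<le> x + \<epsilon>"
    proof (rule cSUP_least)
      show "?P \<noteq> {}" using p0 by auto
      fix p' assume "p' \<in> ?P"
      hence "mixpay T S (\<lambda>t s. \<pi> s t) q p' \<le> x + \<epsilon>"
        by (intro mixpay_le[of S p' B T q]) (use AB up in \<open>auto simp: fdist_def\<close>)
      thus "?M p' q \<le> x + \<epsilon>" by (simp add: mixpay_swap[of S T \<pi> p' q])
    qed
    finally show ?thesis using xL by linarith
  qed
  have "U \<le> L" by (rule field_le_epsilon) (use UL in auto)
  with LU show ?thesis unfolding minimax_property_def L_def U_def by linarith
qed

lemma fdist_not:
  assumes "fdist A p"
  shows "(\<Sum>s\<in>A. p s * of_bool (\<not> P s)) = 1 - (\<Sum>s\<in>A. p s * of_bool (P s))"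
proof -
  have "(\<Sum>s\<in>A. p s * of_bool (\<not> P s)) = (\<Sum>s\<in>A. p s - p s * of_bool (P s))"
    by (intro sum.cong) auto
  also have "\<dots> = sum p A - (\<Sum>s\<in>A. p s * of_bool (P s))" by (rule sum_subtractf)
  finally show ?thesis using assms by (simp add: fdist_def)
qed

lemma approx_saddle_transpose:
  assumes "approx_saddle T S (\<lambda>t s. \<not> \<pi> s t)"
  shows "approx_saddle S T \<pi>"
  unfolding approx_saddle_def
proof (intro allI impI)
  fix \<epsilon> :: real assume "\<epsilon> > 0"
  then obtain B q A p x where AB: "B \<subseteq> T" "fdist B q" "A \<subseteq> S" "fdist A p"
      and lo: "\<forall>s\<in>S. x \<le> (\<Sum>t\<in>B. q t * of_bool (\<not> \<pi> s t))"
      and up: "\<forall>t\<in>T. (\<Sum>s\<in>A. p s * of_bool (\<not> \<pi> s t)) \<le> x + \<epsilon>"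
    using assms[unfolded approx_saddle_def, rule_format, OF \<open>\<epsilon> > 0\<close>] by blast
  have e1: "(\<Sum>t\<in>B. q t * of_bool (\<not> \<pi> s t)) = 1 - (\<Sum>t\<in>B. q t * of_bool (\<pi> s t))" for s
    by (rule fdist_not) (use AB in blast)
  have e2: "(\<Sum>s\<in>A. p s * of_bool (\<not> \<pi> s t)) = 1 - (\<Sum>s\<in>A. p s * of_bool (\<pi> s t))" for t
    by (rule fdist_not) (use AB in blast)
  show "\<exists>A p B q x. A \<subseteq> S \<and> fdist A p \<and> B \<subseteq> T \<and> fdist B q \<and>
     (\<forall>t\<in>T. x \<le> (\<Sum>s\<in>A. p s * of_bool (\<pi> s t))) \<and>
     (\<forall>s\<in>S. (\<Sum>t\<in>B. q t * of_bool (\<pi> s t)) \<le> x + \<epsilon>)"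
  proof (intro exI[of _ A] exI[of _ p] exI[of _ B] exI[of _ q] exI[of _ "1 - x - \<epsilon>"] conjI ballI)
    fix t assume "t \<in> T"
    thus "1 - x - \<epsilon> \<le> (\<Sum>s\<in>A. p s * of_bool (\<pi> s t))" using up e2[of t] by fastforce
  next
    fix s assume "s \<in> S"
    thus "(\<Sum>t\<in>B. q t * of_bool (\<pi> s t)) \<le> 1 - x - \<epsilon> + \<epsilon>" using lo e1[of s] by fastforce
  qed (use AB in blast)+
qed



definition brsp :: "'a set \<Rightarrow> 'b set \<Rightarrow> ('a \<Rightarrow> 'b \<Rightarrow> bool) \<Rightarrow> ('b \<Rightarrow> real) \<Rightarrow> 'a" where
  "brsp A B \<pi> w = (SOME a. a \<in> A \<and> (\<forall>a'\<in>A. (\<Sum>b\<in>B. w b * of_bool (\<pi> a' b)) \<le> (\<Sum>b\<in>B. w b * of_bool (\<pi> a b))))"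

lemma brsp:
  assumes "finite A" "A \<noteq> {}"
  shows "brsp A B \<pi> w \<in> A \<and> (\<forall>a'\<in>A. (\<Sum>b\<in>B. w b * of_bool (\<pi> a' b)) \<le> (\<Sum>b\<in>B. w b * of_bool (\<pi> (brsp A B \<pi> w) b)))"
proof -
  let ?f = "\<lambda>a. \<Sum>b\<in>B. w b * of_bool (\<pi> a b)"
  have "Max (?f ` A) \<in> ?f ` A" using assms by (intro Max_in) auto
  then obtain a where a: "a \<in> A" "?f a = Max (?f ` A)" by auto
  have "\<forall>a'\<in>A. ?f a' \<le> ?f a" using assms a by (auto intro: Max_ge)
  with a have "\<exists>a. a \<in> A \<and> (\<forall>a'\<in>A. ?f a' \<le> ?f a)" by blast
  thus ?thesis unfolding brsp_def by (rule someI_ex)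
qed

primrec wts :: "'a set \<Rightarrow> 'b set \<Rightarrow> ('a \<Rightarrow> 'b \<Rightarrow> bool) \<Rightarrow> real \<Rightarrow> nat \<Rightarrow> 'b \<Rightarrow> real" where
  "wts A B \<pi> \<beta> 0 = (\<lambda>_. 1)"
| "wts A B \<pi> \<beta> (Suc k) = (\<lambda>b. wts A B \<pi> \<beta> k b * (if \<pi> (brsp A B \<pi> (wts A B \<pi> \<beta> k)) b then \<beta> else 1))"

lemma mw:
  fixes A :: "'a set" and B :: "'b set" and \<pi> :: "'a \<Rightarrow> 'b \<Rightarrow> bool"
  assumes A: "finite A" "A \<noteq> {}" and B: "finite B" "B \<noteq> {}" and eps: "\<epsilon> > 0"
  shows "\<exists>p q x. fdist A p \<and> fdist B q \<and> x \<le> 1 \<and>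
     (\<forall>b\<in>B. x \<le> (\<Sum>a\<in>A. p a * of_bool (\<pi> a b))) \<and>
     (\<forall>a\<in>A. (\<Sum>b\<in>B. q b * of_bool (\<pi> a b)) \<le> x + \<epsilon>)"
proof -
  define \<eta> :: real where "\<eta> = min (\<epsilon>/2) (1/2)"
  define \<beta> where "\<beta> = 1 - \<eta>"
  have \<eta>: "0 < \<eta>" "\<eta> \<le> \<epsilon>/2" "\<eta> \<le> 1/2" using eps by (auto simp: \<eta>_def)
  have \<beta>: "0 < \<beta>" "\<beta> \<le> 1" using \<eta> by (auto simp: \<beta>_def)
  define n where "n = real (card B)"
  have n: "1 \<le> n" using B by (auto simp: n_def Suc_le_eq card_gt_0_iff)
  define L where "L = ln n"
  have L: "0 \<le> L" using n by (simp add: L_def)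
  define K :: nat where "K = nat \<lceil>2 * L / (\<eta> * \<epsilon>)\<rceil> + 1"
  have K: "2 * L / (\<eta> * \<epsilon>) \<le> real K" "0 < K" unfolding K_def by linarith+
  define w where "w k = wts A B \<pi> \<beta> k" for k
  define a where "a k = brsp A B \<pi> (w k)" for k
  have w0: "w 0 b = 1" for b by (simp add: w_def)
  have wS: "w (Suc k) b = w k b * (if \<pi> (a k) b then \<beta> else 1)" for k b by (simp add: w_def a_def)
  have a_in: "a k \<in> A" for k using brsp[OF A, of B \<pi> "w k"] by (simp add: a_def)
  define W where "W k = (\<Sum>b\<in>B. w k b)" for k
  define G where "G k = (\<Sum>b\<in>B. w k b * of_bool (\<pi> (a k) b))" for k
  define g where "g k = G k / W k" for k
  have a_br: "(\<Sum>b\<in>B. w k b * of_bool (\<pi> a' b)) \<le> G k" if "a' \<in> A" for k a'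
    using brsp[OF A, of B \<pi> "w k"] that by (simp add: a_def G_def)
  have w_pos: "0 < w k b" for k b
    by (induction k) (use \<beta> in \<open>auto simp: w0 wS\<close>)
  have W_pos: "0 < W k" for k unfolding W_def using B w_pos by (intro sum_pos) auto
  have G_nn: "0 \<le> G k" for k unfolding G_def using w_pos by (intro sum_nonneg) (auto intro: less_imp_le)
  have G_le: "G k \<le> W k" for k unfolding G_def W_def using w_pos
    by (intro sum_mono) (auto intro: less_imp_le)
  have g01: "0 \<le> g k" "g k \<le> 1" for k
    using G_nn[of k] G_le[of k] W_pos[of k] by (auto simp: g_def)
  have W_step: "W (Suc k) = W k * (1 - \<eta> * g k)" for k
  proof -
    have "W (Suc k) = (\<Sum>b\<in>B. w k b - \<eta> * (w k b * of_bool (\<pi> (a k) b)))"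
      unfolding W_def by (intro sum.cong) (auto simp: wS \<beta>_def algebra_simps)
    also have "\<dots> = W k - \<eta> * G k"
      by (simp add: W_def G_def sum_subtractf sum_distrib_left)
    also have "\<dots> = W k * (1 - \<eta> * g k)"
      using W_pos[of k] by (simp add: g_def field_simps)
    finally show ?thesis .
  qed
  have W_bound: "W k \<le> n * exp (- \<eta> * (\<Sum>i<k. g i))" for k
  proof (induction k)
    case 0
    show ?case by (simp add: W_def w0 n_def)
  next
    case (Suc k)
    have "W (Suc k) = W k * (1 - \<eta> * g k)" by (rule W_step)
    also have "\<dots> \<le> W k * exp (- \<eta> * g k)"
      using W_pos[of k] exp_ge_add_one_self[of "- \<eta> * g k"]
      by (intro mult_left_mono) auto
    also have "\<dots> \<le> n * exp (- \<eta> * (\<Sum>i<k. g i)) * exp (- \<eta> * g k)"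
      using Suc by (intro mult_right_mono) auto
    also have "\<dots> = n * exp (- \<eta> * (\<Sum>i<Suc k. g i))"
      by (simp add: algebra_simps exp_add[symmetric])
    finally show ?case .
  qed
  define c where "c k b = (\<Sum>i<k. of_bool (\<pi> (a i) b) :: real)" for k b
  have expb: "exp (- \<eta> / \<beta>) \<le> \<beta>"
  proof -
    have "ln (1 / \<beta>) \<le> 1 / \<beta> - 1" using \<beta> by (intro ln_le_minus_one) auto
    hence "- \<eta> / \<beta> \<le> ln \<beta>" using \<beta> by (simp add: ln_div \<beta>_def field_simps)
    hence "exp (- \<eta> / \<beta>) \<le> exp (ln \<beta>)" by simp
    thus ?thesis using \<beta> by simp
  qed
  have w_lower: "exp (- (\<eta> / \<beta>) * c k b) \<le> w k b" for k b
  proof (induction k)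
    case 0
    show ?case by (simp add: c_def w0)
  next
    case (Suc k)
    show ?case
    proof (cases "\<pi> (a k) b")
      case True
      have "exp (- (\<eta> / \<beta>) * c (Suc k) b) = exp (- (\<eta> / \<beta>) * c k b) * exp (- \<eta> / \<beta>)"
        using True by (simp add: c_def algebra_simps exp_add[symmetric])
      also have "\<dots> \<le> w k b * \<beta>"
        using Suc expb w_pos[of k b] by (intro mult_mono) auto
      finally show ?thesis using True by (simp add: wS)
    next
      case False
      thus ?thesis using Suc by (simp add: c_def wS)
    qed
  qed
  obtain j where j: "j < K" "\<And>i. i < K \<Longrightarrow> g j \<le> g i"
  proof -
    have "Min (g ` {..<K}) \<in> g ` {..<K}" using K by (intro Min_in) auto
    then obtain j where "j < K" "g j = Min (g ` {..<K})" by auto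
    thus ?thesis using that by (metis Min_le finite_imageI finite_lessThan imageI lessThan_iff)
  qed
  define Sg where "Sg = (\<Sum>i<K. g i)"
  have Kg: "real K * g j \<le> Sg"
  proof -
    have "(\<Sum>i<K. g j) \<le> Sg" unfolding Sg_def using j by (intro sum_mono) auto
    thus ?thesis by simp
  qed
  have key: "g j - \<epsilon> \<le> c K b / real K" if b: "b \<in> B" for b
  proof -
    define C where "C = c K b"
    have "exp (- (\<eta> / \<beta>) * C) \<le> w K b" unfolding C_def by (rule w_lower)
    also have "\<dots> \<le> W K" unfolding W_def using b B w_pos
      by (intro member_le_sum) (auto intro: less_imp_le)
    also have "\<dots> \<le> n * exp (- \<eta> * Sg)" unfolding Sg_def by (rule W_bound)
    finally have "ln (exp (- (\<eta> / \<beta>) * C)) \<le> ln (n * exp (- \<eta> * Sg))"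
      using n by (subst ln_le_cancel_iff) auto
    hence s1: "- (\<eta> / \<beta>) * C \<le> L - \<eta> * Sg" using n by (simp add: ln_mult L_def)
    have s2: "Sg \<le> L / \<eta> + C / \<beta>"
    proof -
      have "\<eta> * Sg \<le> L + (\<eta> / \<beta>) * C" using s1 by linarith
      moreover have "\<eta> * (L / \<eta> + C / \<beta>) = L + (\<eta> / \<beta>) * C"
        using \<eta> by (simp add: field_simps)
      ultimately have "\<eta> * Sg \<le> \<eta> * (L / \<eta> + C / \<beta>)" by linarith
      thus ?thesis using \<eta> by (simp add: mult_le_cancel_left_pos)
    qed
    have s3: "\<beta> * (real K * g j) - \<beta> * (L / \<eta>) \<le> C"
    proof -
      have "\<beta> * (real K * g j) \<le> \<beta> * (L / \<eta> + C / \<beta>)"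
        using Kg s2 \<beta> by (intro mult_left_mono) auto
      moreover have "\<beta> * (L / \<eta> + C / \<beta>) = \<beta> * (L / \<eta>) + C"
        using \<beta> by (simp add: field_simps)
      ultimately show ?thesis by linarith
    qed
    have s4: "L / (\<eta> * real K) \<le> \<epsilon> / 2"
    proof -
      have "2 * L \<le> real K * (\<eta> * \<epsilon>)" using K(1) \<eta> eps by (simp add: field_simps)
      thus ?thesis using K(2) \<eta> eps by (simp add: field_simps)
    qed
    have s5: "\<beta> * g j - \<beta> * (L / (\<eta> * real K)) \<le> C / real K"
    proof -
      have "(\<beta> * (real K * g j) - \<beta> * (L / \<eta>)) / real K \<le> C / real K"
        using s3 K(2) by (intro divide_right_mono) auto
      moreover have "(\<beta> * (real K * g j) - \<beta> * (L / \<eta>)) / real K = \<beta> * g j - \<beta> * (L / (\<eta> * real K))"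
        using K(2) \<eta> by (simp add: field_simps)
      ultimately show ?thesis by linarith
    qed
    have s6: "\<beta> * (L / (\<eta> * real K)) \<le> \<epsilon> / 2"
    proof -
      have "\<beta> * (L / (\<eta> * real K)) \<le> 1 * (L / (\<eta> * real K))"
        using \<beta> L \<eta> K(2) by (intro mult_right_mono) auto
      thus ?thesis using s4 by linarith
    qed
    have s7: "g j - \<epsilon> / 2 \<le> \<beta> * g j"
    proof -
      have "\<eta> * g j \<le> \<eta> * 1" using g01[of j] \<eta> by (intro mult_left_mono) auto
      moreover have "\<beta> * g j = g j - \<eta> * g j" by (simp add: \<beta>_def algebra_simps)
      ultimately show ?thesis using \<eta> by linarith
    qed
    show ?thesis using s5 s6 s7 unfolding C_def by linarith
  qed
  define p where "p x = (\<Sum>i<K. of_bool (a i = x)) / real K" for x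
  define q where "q b = (if b \<in> B then w j b / W j else 0)" for b
  have p_sum: "(\<Sum>x\<in>A. p x * f x) = (\<Sum>i<K. f (a i)) / real K" for f :: "'a \<Rightarrow> real"
  proof -
    have "(\<Sum>x\<in>A. p x * f x) = (\<Sum>x\<in>A. \<Sum>i<K. of_bool (a i = x) * f x) / real K"
      by (simp add: p_def sum_divide_distrib sum_distrib_right)
    also have "(\<Sum>x\<in>A. \<Sum>i<K. of_bool (a i = x) * f x) = (\<Sum>i<K. \<Sum>x\<in>A. of_bool (a i = x) * f x)"
      by (rule sum.swap)
    also have "\<dots> = (\<Sum>i<K. f (a i))"
    proof (intro sum.cong refl)
      fix i assume "i \<in> {..<K}"
      have "(\<Sum>x\<in>A. of_bool (a i = x) * f x) = (\<Sum>x\<in>A. if a i = x then f x else 0)"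
        by (intro sum.cong) auto
      also have "\<dots> = f (a i)" using A(1) a_in[of i] by (simp add: sum.delta)
      finally show "(\<Sum>x\<in>A. of_bool (a i = x) * f x) = f (a i)" .
    qed
    finally show ?thesis .
  qed
  have fp: "fdist A p"
  proof -
    have "(\<Sum>x\<in>A. p x) = (\<Sum>x\<in>A. p x * (\<lambda>_. 1) x)" by simp
    also have "\<dots> = 1" using K(2) by (subst p_sum) simp
    finally have "sum p A = 1" .
    moreover have "p x = 0" if "x \<notin> A" for x
      using that a_in by (auto simp: p_def intro!: sum.neutral)
    moreover have "0 \<le> p x" for x by (simp add: p_def sum_nonneg)
    ultimately show ?thesis using A by (simp add: fdist_def)
  qed
  have fq: "fdist B q"
  proof -
    have "sum q B = (\<Sum>b\<in>B. w j b) / W j" by (simp add: q_def sum_divide_distrib)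
    also have "\<dots> = 1" using W_pos[of j] by (simp add: W_def)
    finally show ?thesis using B w_pos W_pos[of j]
      by (auto simp: fdist_def q_def intro: less_imp_le divide_nonneg_pos)
  qed
  show ?thesis
  proof (intro exI[of _ p] exI[of _ q] exI[of _ "g j - \<epsilon>"] conjI ballI fp fq)
    show "g j - \<epsilon> \<le> 1" using g01[of j] eps by simp
  next
    fix b assume "b \<in> B"
    hence "g j - \<epsilon> \<le> c K b / real K" by (rule key)
    also have "\<dots> = (\<Sum>x\<in>A. p x * of_bool (\<pi> x b))" by (subst p_sum) (simp add: c_def)
    finally show "g j - \<epsilon> \<le> (\<Sum>x\<in>A. p x * of_bool (\<pi> x b))" .
  next
    fix a' assume "a' \<in> A"
    have "(\<Sum>b\<in>B. q b * of_bool (\<pi> a' b)) = (\<Sum>b\<in>B. w j b * of_bool (\<pi> a' b)) / W j"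
      by (simp add: q_def sum_divide_distrib)
    also have "\<dots> \<le> G j / W j" using a_br[OF \<open>a' \<in> A\<close>] W_pos[of j] by (intro divide_right_mono) auto
    finally show "(\<Sum>b\<in>B. q b * of_bool (\<pi> a' b)) \<le> g j - \<epsilon> + \<epsilon>" by (simp add: g_def)
  qed
qed



lemma fdist_sum_super:
  assumes "fdist A p" "A \<subseteq> A'" "finite A'"
  shows "(\<Sum>s\<in>A'. p s * f s) = (\<Sum>s\<in>A. p s * f s)"
  using assms by (intro sum.mono_neutral_right) (auto simp: fdist_def)

lemma mw_rows:
  fixes S :: "'s set" and B :: "'t set" and \<pi> :: "'s \<Rightarrow> 't \<Rightarrow> bool"
  assumes S: "S \<noteq> {}" and B: "finite B" "B \<noteq> {}" and d: "\<delta> > 0"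
  shows "\<exists>A p q x. A \<subseteq> S \<and> fdist A p \<and> fdist B q \<and> x \<le> 1 \<and>
     (\<forall>t\<in>B. x \<le> (\<Sum>s\<in>A. p s * of_bool (\<pi> s t))) \<and>
     (\<forall>s\<in>S. (\<Sum>t\<in>B. q t * of_bool (\<pi> s t)) \<le> x + \<delta>)"
proof -
  define pat where "pat s = {t\<in>B. \<pi> s t}" for s
  define rep where "rep X = (SOME s. s \<in> S \<and> pat s = X)" for X
  have rep: "rep (pat s) \<in> S \<and> pat (rep (pat s)) = pat s" if "s \<in> S" for s
    unfolding rep_def by (rule someI_ex) (use that in blast)
  define A where "A = rep ` pat ` S"
  have finA: "finite A"
  proof -
    have "pat ` S \<subseteq> Pow B" by (auto simp: pat_def)
    hence "finite (pat ` S)" using B(1) by (meson finite_Pow_iff finite_subset)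
    thus ?thesis unfolding A_def by simp
  qed
  have AS: "A \<subseteq> S" using rep by (auto simp: A_def)
  have Ane: "A \<noteq> {}" using S by (auto simp: A_def)
  obtain p q x where pq: "fdist A p" "fdist B q" "x \<le> 1"
    and lo: "\<forall>b\<in>B. x \<le> (\<Sum>a\<in>A. p a * of_bool (\<pi> a b))"
    and up: "\<forall>a\<in>A. (\<Sum>b\<in>B. q b * of_bool (\<pi> a b)) \<le> x + \<delta>"
    using mw[OF finA Ane B d, of \<pi>] by blast
  have "(\<Sum>t\<in>B. q t * of_bool (\<pi> s t)) \<le> x + \<delta>" if s: "s \<in> S" for s
  proof -
    let ?r = "rep (pat s)"
    have r: "?r \<in> A" using s by (auto simp: A_def)
    have "\<pi> s t = \<pi> ?r t" if "t \<in> B" for t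
      using rep[OF s] that unfolding pat_def by blast
    hence "(\<Sum>t\<in>B. q t * of_bool (\<pi> s t)) = (\<Sum>t\<in>B. q t * of_bool (\<pi> ?r t))"
      by (intro sum.cong) auto
    also have "\<dots> \<le> x + \<delta>" using up r by blast
    finally show ?thesis .
  qed
  thus ?thesis using AS pq lo by blast
qed

lemma mw_cols:
  fixes A :: "'s set" and T :: "'t set" and \<pi> :: "'s \<Rightarrow> 't \<Rightarrow> bool"
  assumes T: "T \<noteq> {}" and A: "finite A" "A \<noteq> {}" and d: "\<delta> > 0"
  shows "\<exists>B p q x. B \<subseteq> T \<and> fdist A p \<and> fdist B q \<and>
     (\<forall>t\<in>T. x \<le> (\<Sum>s\<in>A. p s * of_bool (\<pi> s t))) \<and>
     (\<forall>s\<in>A. (\<Sum>t\<in>B. q t * of_bool (\<pi> s t)) \<le> x + \<delta>)"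
proof -
  obtain B q p x where h: "B \<subseteq> T" "fdist B q" "fdist A p"
    and lo: "\<forall>s\<in>A. x \<le> (\<Sum>t\<in>B. q t * of_bool (\<not> \<pi> s t))"
    and up: "\<forall>t\<in>T. (\<Sum>s\<in>A. p s * of_bool (\<not> \<pi> s t)) \<le> x + \<delta>"
    using mw_rows[OF T A d, of "\<lambda>t s. \<not> \<pi> s t"] by blast
  have "\<forall>t\<in>T. 1 - x - \<delta> \<le> (\<Sum>s\<in>A. p s * of_bool (\<pi> s t))"
    using up fdist_not[OF h(3)] by fastforce
  moreover have "\<forall>s\<in>A. (\<Sum>t\<in>B. q t * of_bool (\<pi> s t)) \<le> 1 - x - \<delta> + \<delta>"
    using lo fdist_not[OF h(2)] by fastforce
  ultimately show ?thesis using h by blast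
qed



lemma case1:
  fixes S :: "'s set" and T :: "'t set" and \<pi> :: "'s \<Rightarrow> 't \<Rightarrow> bool"
  assumes S: "S \<noteq> {}" and T: "T \<noteq> {}" and fin: "finite {s\<in>S. infinite {t\<in>T. \<not> \<pi> s t}}"
  shows "approx_saddle S T \<pi>"
  unfolding approx_saddle_def
proof (intro allI impI)
  fix \<epsilon> :: real assume eps: "\<epsilon> > 0"
  define F where "F = {s\<in>S. infinite {t\<in>T. \<not> \<pi> s t}}"
  define Z where "Z s = {t\<in>T. \<not> \<pi> s t}" for s
  have finF: "finite F" using fin by (simp add: F_def)
  have finZ: "finite (Z s)" if "s \<in> S" "s \<notin> F" for s using that by (auto simp: F_def Z_def)
  have ZT: "Z s \<subseteq> T" for s by (auto simp: Z_def)
  define key where "key t = {f\<in>F. \<pi> f t}" for t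
  define rk where "rk k = (SOME t. t \<in> T \<and> key t = k)" for k
  have rk: "rk (key t) \<in> T \<and> key (rk (key t)) = key t" if "t \<in> T" for t
    unfolding rk_def by (rule someI_ex) (use that in blast)
  define T0 where "T0 = rk ` key ` T"
  have T0fin: "finite T0"
  proof -
    have "key ` T \<subseteq> Pow F" by (auto simp: key_def)
    hence "finite (key ` T)" using finF by (meson finite_Pow_iff finite_subset)
    thus ?thesis by (simp add: T0_def)
  qed
  have T0ne: "T0 \<noteq> {}" using T by (simp add: T0_def)
  have T0T: "T0 \<subseteq> T" using rk by (auto simp: T0_def)
  define \<delta> where "\<delta> = \<epsilon> / 2"
  have \<delta>: "\<delta> > 0" using eps by (simp add: \<delta>_def)
  define good where "good X z \<longleftrightarrow> fst z \<subseteq> S \<and> fdist (fst z) (fst (snd z)) \<and> fdist X (fst (snd (snd z)))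
     \<and> snd (snd (snd z)) \<le> 1
     \<and> (\<forall>t\<in>X. snd (snd (snd z)) \<le> (\<Sum>s\<in>fst z. fst (snd z) s * of_bool (\<pi> s t)))
     \<and> (\<forall>s\<in>S. (\<Sum>t\<in>X. fst (snd (snd z)) t * of_bool (\<pi> s t)) \<le> snd (snd (snd z)) + \<delta>)"
    for X and z :: "'s set \<times> ('s \<Rightarrow> real) \<times> ('t \<Rightarrow> real) \<times> real"
  define CH where "CH X = (SOME z. good X z)" for X
  have CH: "good X (CH X)" if fX: "finite X" and nX: "X \<noteq> {}" for X
  proof -
    obtain A p q x where "A \<subseteq> S \<and> fdist A p \<and> fdist X q \<and> x \<le> 1 \<and>
       (\<forall>t\<in>X. x \<le> (\<Sum>s\<in>A. p s * of_bool (\<pi> s t))) \<and>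
       (\<forall>s\<in>S. (\<Sum>t\<in>X. q t * of_bool (\<pi> s t)) \<le> x + \<delta>)"
      using mw_rows[OF S fX nX \<delta>, of \<pi>] by blast
    hence "good X (A, p, q, x)" by (simp add: good_def)
    hence "\<exists>z. good X z" by blast
    thus ?thesis unfolding CH_def by (rule someI_ex)
  qed
  define step where "step X = X \<union> \<Union> (Z ` (fst (CH X) - F))" for X
  define TT where "TT i = (step ^^ i) T0" for i
  have TT0: "TT 0 = T0" by (simp add: TT_def)
  have TTS: "TT (Suc i) = step (TT i)" for i by (simp add: TT_def)
  have inv: "finite (TT i) \<and> TT i \<noteq> {} \<and> TT i \<subseteq> T" for i
  proof (induction i)
    case 0 thus ?case using T0fin T0ne T0T by (simp add: TT0)
  next
    case (Suc i)
    have g: "good (TT i) (CH (TT i))" using Suc CH by blast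
    hence fA: "finite (fst (CH (TT i)))" and AS: "fst (CH (TT i)) \<subseteq> S"
      by (auto simp: good_def fdist_def)
    have "finite (\<Union> (Z ` (fst (CH (TT i)) - F)))"
      using fA AS finZ by (intro finite_Union) auto
    thus ?case using Suc ZT by (auto simp: TTS step_def)
  qed
  define Ai where "Ai i = fst (CH (TT i))" for i
  define pi where "pi i = fst (snd (CH (TT i)))" for i
  define qi where "qi i = fst (snd (snd (CH (TT i))))" for i
  define xi where "xi i = snd (snd (snd (CH (TT i))))" for i
  have gi: "good (TT i) (CH (TT i))" for i using inv CH by blast
  have AiS: "Ai i \<subseteq> S" and fpi: "fdist (Ai i) (pi i)" and fqi: "fdist (TT i) (qi i)"
    and xi1: "xi i \<le> 1"
    and loi: "\<forall>t\<in>TT i. xi i \<le> (\<Sum>s\<in>Ai i. pi i s * of_bool (\<pi> s t))"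
    and upi: "\<forall>s\<in>S. (\<Sum>t\<in>TT i. qi i t * of_bool (\<pi> s t)) \<le> xi i + \<delta>" for i
    using gi[of i] by (simp_all add: good_def Ai_def pi_def qi_def xi_def)
  have TTmono1: "TT i \<subseteq> TT (Suc i)" for i by (auto simp: TTS step_def)
  have TTmono: "TT i \<subseteq> TT j" if "i \<le> j" for i j
    using lift_Suc_mono_le[of TT, OF TTmono1 that] .
  have T0TT: "T0 \<subseteq> TT i" for i using TTmono[of 0 i] by (simp add: TT0)
  have ZTT: "Z s \<subseteq> TT (Suc i)" if "s \<in> Ai i" "s \<notin> F" for s i
    using that by (auto simp: TTS step_def Ai_def)
  obtain n :: nat where n: "2 / \<epsilon> < real n" using reals_Archimedean2 by blast
  have npos: "0 < n" using n eps by (cases n) auto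
  have n2: "1 / real n \<le> \<epsilon> / 2"
    using n eps npos by (simp add: field_simps)
  obtain j where j: "j < n" "\<And>i. i < n \<Longrightarrow> xi j \<le> xi i"
  proof -
    have "Min (xi ` {..<n}) \<in> xi ` {..<n}" using npos by (intro Min_in) auto
    then obtain j where "j < n" "xi j = Min (xi ` {..<n})" by auto
    thus ?thesis using that by (metis Min_le finite_imageI finite_lessThan imageI lessThan_iff)
  qed
  define xs where "xs = xi j"
  define P where "P i t = (\<Sum>s\<in>Ai i. pi i s * of_bool (\<pi> s t))" for i t
  have claim: "xs - (of_bool (t \<in> TT (Suc i)) - of_bool (t \<in> TT i)) \<le> P i t"
    if t: "t \<in> T" and i: "i < n" for t i
  proof -
    have Pnn: "0 \<le> P i t" unfolding P_def using fpi[of i]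
      by (intro sum_nonneg) (auto simp: fdist_def)
    have xsi: "xs \<le> xi i" using j i by (simp add: xs_def)
    show ?thesis
    proof (cases "t \<in> TT i")
      case True
      hence "t \<in> TT (Suc i)" using TTmono1 by blast
      moreover have "xi i \<le> P i t" using True loi[of i] by (simp add: P_def)
      ultimately show ?thesis using True xsi by simp
    next
      case False
      show ?thesis
      proof (cases "t \<in> TT (Suc i)")
        case True
        thus ?thesis using False Pnn xsi xi1[of i] by simp
      next
        case False2: False
        define r where "r = rk (key t)"
        have r: "r \<in> TT i" "key r = key t" using rk[OF t] T0TT[of i] by (auto simp: r_def T0_def)
        have "P i r \<le> P i t" unfolding P_def
        proof (intro sum_mono mult_left_mono)
          fix s assume s: "s \<in> Ai i"
          show "0 \<le> pi i s" using fpi[of i] by (simp add: fdist_def)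
          show "of_bool (\<pi> s r) \<le> (of_bool (\<pi> s t) :: real)"
          proof (cases "s \<in> F")
            case True
            hence "\<pi> s r = \<pi> s t" using r(2) unfolding key_def by blast
            thus ?thesis by simp
          next
            case False
            hence "t \<notin> Z s" using ZTT[OF s False] False2 by blast
            hence "\<pi> s t" using t by (simp add: Z_def)
            thus ?thesis by simp
          qed
        qed
        moreover have "xi i \<le> P i r" using loi[of i] r(1) by (simp add: P_def)
        ultimately show ?thesis using False False2 xsi by simp
      qed
    qed
  qed
  define A where "A = \<Union> (Ai ` {..<n})"
  define p where "p s = (\<Sum>i<n. pi i s) / real n" for s
  have finA: "finite A" using fpi by (auto simp: A_def fdist_def)
  have AiA: "Ai i \<subseteq> A" if "i < n" for i using that by (auto simp: A_def)
  have psum: "(\<Sum>s\<in>A. p s * f s) = (\<Sum>i<n. \<Sum>s\<in>Ai i. pi i s * f s) / real n" for f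
  proof -
    have "(\<Sum>s\<in>A. p s * f s) = (\<Sum>s\<in>A. \<Sum>i<n. pi i s * f s) / real n"
      by (simp add: p_def sum_divide_distrib sum_distrib_right)
    also have "(\<Sum>s\<in>A. \<Sum>i<n. pi i s * f s) = (\<Sum>i<n. \<Sum>s\<in>A. pi i s * f s)" by (rule sum.swap)
    also have "\<dots> = (\<Sum>i<n. \<Sum>s\<in>Ai i. pi i s * f s)"
      by (intro sum.cong refl fdist_sum_super[OF fpi AiA finA]) auto
    finally show ?thesis .
  qed
  have fpA: "fdist A p"
  proof -
    have "(\<Sum>s\<in>A. p s) = (\<Sum>s\<in>A. p s * (\<lambda>_. 1) s)" by simp
    also have "\<dots> = (\<Sum>i<n. \<Sum>s\<in>Ai i. pi i s * 1) / real n" by (rule psum)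
    also have "\<dots> = 1" using fpi npos by (simp add: fdist_def)
    finally have "sum p A = 1" .
    moreover have "p s = 0" if "s \<notin> A" for s
      using that fpi by (auto simp: p_def A_def fdist_def intro!: sum.neutral)
    moreover have "0 \<le> p s" for s
    proof -
      have "0 \<le> (\<Sum>i<n. pi i s)" using fpi by (intro sum_nonneg) (simp add: fdist_def)
      thus ?thesis by (simp add: p_def)
    qed
    ultimately show ?thesis using finA by (simp add: fdist_def)
  qed
  have AS: "A \<subseteq> S" using AiS by (auto simp: A_def)
  have low: "xs - \<epsilon> / 2 \<le> (\<Sum>s\<in>A. p s * of_bool (\<pi> s t))" if t: "t \<in> T" for t
  proof -
    have "(\<Sum>i<n. xs - (of_bool (t \<in> TT (Suc i)) - of_bool (t \<in> TT i))) \<le> (\<Sum>i<n. P i t)"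
      using claim[OF t] by (intro sum_mono) auto
    moreover have "(\<Sum>i<n. xs - (of_bool (t \<in> TT (Suc i)) - of_bool (t \<in> TT i)) :: real)
        = real n * xs - (of_bool (t \<in> TT n) - of_bool (t \<in> TT 0))"
    proof -
      define f where "f i = (of_bool (t \<in> TT i) :: real)" for i
      have "(\<Sum>i<n. xs - (f (Suc i) - f i)) = (\<Sum>i<n. xs) - (\<Sum>i<n. f (Suc i) - f i)"
        by (rule sum_subtractf)
      also have "(\<Sum>i<n. f (Suc i) - f i) = f n - f 0" by (rule sum_lessThan_telescope)
      finally show ?thesis by (simp add: f_def)
    qed
    moreover have "of_bool (t \<in> TT n) - of_bool (t \<in> TT 0) \<le> (1::real)" by simp
    ultimately have "real n * xs - 1 \<le> (\<Sum>i<n. P i t)" by linarith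
    hence "(real n * xs - 1) / real n \<le> (\<Sum>i<n. P i t) / real n"
      using npos by (intro divide_right_mono) auto
    moreover have "(real n * xs - 1) / real n = xs - 1 / real n" using npos by (simp add: field_simps)
    moreover have "(\<Sum>s\<in>A. p s * of_bool (\<pi> s t)) = (\<Sum>i<n. P i t) / real n"
      by (simp add: psum P_def)
    ultimately show ?thesis using n2 by linarith
  qed
  show "\<exists>A p B q x. A \<subseteq> S \<and> fdist A p \<and> B \<subseteq> T \<and> fdist B q \<and>
     (\<forall>t\<in>T. x \<le> (\<Sum>s\<in>A. p s * of_bool (\<pi> s t))) \<and>
     (\<forall>s\<in>S. (\<Sum>t\<in>B. q t * of_bool (\<pi> s t)) \<le> x + \<epsilon>)"
  proof (intro exI[of _ A] exI[of _ p] exI[of _ "TT j"] exI[of _ "qi j"] exI[of _ "xs - \<epsilon> / 2"] conjI ballI)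
    show "A \<subseteq> S" by (rule AS)
    show "fdist A p" by (rule fpA)
    show "TT j \<subseteq> T" using inv by blast
    show "fdist (TT j) (qi j)" by (rule fqi)
    show "xs - \<epsilon> / 2 \<le> (\<Sum>s\<in>A. p s * of_bool (\<pi> s t))" if "t \<in> T" for t using low that by blast
    show "(\<Sum>t\<in>TT j. qi j t * of_bool (\<pi> s t)) \<le> xs - \<epsilon> / 2 + \<epsilon>" if "s \<in> S" for s
      using upi[of j] that unfolding xs_def \<delta>_def by fastforce
  qed
qed



lemma case2:
  fixes S :: "'s set" and T :: "'t set" and \<pi> :: "'s \<Rightarrow> 't \<Rightarrow> bool"
  assumes S: "S \<noteq> {}" and T: "T \<noteq> {}"
    and fin: "finite {s\<in>S. \<not> (finite {t\<in>T. \<pi> s t} \<and> card {t\<in>T. \<pi> s t} \<le> N)}"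
  shows "approx_saddle S T \<pi>"
  unfolding approx_saddle_def
proof (intro allI impI)
  fix \<epsilon> :: real assume eps: "\<epsilon> > 0"
  define F where "F = {s\<in>S. \<not> (finite {t\<in>T. \<pi> s t} \<and> card {t\<in>T. \<pi> s t} \<le> N)}"
  have finF: "finite F" using fin by (simp add: F_def)
  have O: "finite {t\<in>T. \<pi> s t} \<and> card {t\<in>T. \<pi> s t} \<le> N" if "s \<in> S" "s \<notin> F" for s
    using that by (auto simp: F_def)
  define key where "key t = {f\<in>F. \<pi> f t}" for t
  define cls where "cls t = {t'\<in>T. key t' = key t}" for t
  define Tf where "Tf = {t\<in>T. finite (cls t)}"
  have finkey: "finite (key ` T)"
  proof -
    have "key ` T \<subseteq> Pow F" by (auto simp: key_def)
    thus ?thesis using finF by (meson finite_Pow_iff finite_subset)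
  qed
  have finTf: "finite Tf"
  proof -
    have "Tf \<subseteq> \<Union> (cls ` Tf)" by (auto simp: Tf_def cls_def)
    moreover have "cls ` Tf \<subseteq> (\<lambda>k. {t'\<in>T. key t' = k}) ` (key ` T)"
      by (auto simp: cls_def Tf_def)
    hence "finite (cls ` Tf)" using finkey by (meson finite_imageI finite_subset)
    moreover have "\<forall>X\<in>cls ` Tf. finite X" by (auto simp: Tf_def)
    ultimately show ?thesis by (meson finite_Union finite_subset)
  qed
  have TfT: "Tf \<subseteq> T" by (auto simp: Tf_def)
  define pat where "pat s = {t\<in>Tf. \<pi> s t}" for s
  define rp where "rp X = (SOME s. s \<in> S \<and> pat s = X)" for X
  have rp: "rp (pat s) \<in> S \<and> pat (rp (pat s)) = pat s" if "s \<in> S" for s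
    unfolding rp_def by (rule someI_ex) (use that in blast)
  define S0 where "S0 = F \<union> rp ` pat ` S"
  have finS0: "finite S0"
  proof -
    have "pat ` S \<subseteq> Pow Tf" by (auto simp: pat_def)
    hence "finite (pat ` S)" using finTf by (meson finite_Pow_iff finite_subset)
    thus ?thesis using finF by (simp add: S0_def)
  qed
  have S0ne: "S0 \<noteq> {}" using S by (simp add: S0_def)
  have S0S: "S0 \<subseteq> S" using rp by (auto simp: S0_def F_def)
  obtain K :: nat where K: "2 * real N / \<epsilon> < real K" using reals_Archimedean2 by blast
  have Kpos: "0 < K"
  proof -
    have "0 \<le> 2 * real N / \<epsilon>" using eps by simp
    thus ?thesis using K by linarith
  qed
  have NK: "real N / real K \<le> \<epsilon> / 2"
  proof -
    have "2 * real N < real K * \<epsilon>" using K eps by (simp add: field_simps)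
    thus ?thesis using Kpos by (simp add: field_simps)
  qed
  have d2: "\<epsilon> / 2 > 0" using eps by simp
  obtain B p q x where BT: "B \<subseteq> T" and fp: "fdist S0 p" and fq: "fdist B q"
    and lo: "\<forall>t\<in>T. x \<le> (\<Sum>s\<in>S0. p s * of_bool (\<pi> s t))"
    and up: "\<forall>s\<in>S0. (\<Sum>t\<in>B. q t * of_bool (\<pi> s t)) \<le> x + \<epsilon> / 2"
    using mw_cols[OF T finS0 S0ne d2, of \<pi>] by blast
  define D where "D t = (SOME D. D \<subseteq> cls t \<and> finite D \<and> card D = K)" for t
  have D: "D t \<subseteq> cls t \<and> finite (D t) \<and> card (D t) = K" if "t \<in> T" "t \<notin> Tf" for t
  proof -
    have "infinite (cls t)" using that by (simp add: Tf_def)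
    then obtain D' where "finite D'" "card D' = K" "D' \<subseteq> cls t"
      using infinite_arbitrarily_large by blast
    hence "\<exists>D'. D' \<subseteq> cls t \<and> finite D' \<and> card D' = K" by blast
    thus ?thesis unfolding D_def by (rule someI_ex)
  qed
  define wt where "wt b t = (if b \<in> Tf then of_bool (t = b) else of_bool (t \<in> D b) / real K)" for b t
  define B' where "B' = (B \<inter> Tf) \<union> \<Union> (D ` (B - Tf))"
  have finB: "finite B" using fq by (simp add: fdist_def)
  have finB': "finite B'" unfolding B'_def using finB D BT by (auto intro!: finite_Union)
  have B'T: "B' \<subseteq> T" unfolding B'_def using D BT TfT by (auto simp: cls_def)
  define q' where "q' t = (\<Sum>b\<in>B. q b * wt b t)" for t
  have H: "(\<Sum>t\<in>B'. wt b t * h t) = (if b \<in> Tf then h b else (\<Sum>t\<in>D b. h t) / real K)"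
    if b: "b \<in> B" for b and h :: "'t \<Rightarrow> real"
  proof (cases "b \<in> Tf")
    case True
    have "(\<Sum>t\<in>B'. wt b t * h t) = (\<Sum>t\<in>B'. if b = t then h t else 0)"
      using True by (intro sum.cong) (auto simp: wt_def)
    also have "\<dots> = h b" using finB' True b by (simp add: B'_def)
    finally show ?thesis using True by simp
  next
    case False
    have DB': "D b \<subseteq> B'" using False b by (auto simp: B'_def)
    have "(\<Sum>t\<in>B'. wt b t * h t) = (\<Sum>t\<in>B'. (if t \<in> D b then h t else 0) / real K)"
      using False by (intro sum.cong) (auto simp: wt_def)
    also have "\<dots> = (\<Sum>t\<in>B'. if t \<in> D b then h t else 0) / real K"
      by (simp add: sum_divide_distrib)
    also have "(\<Sum>t\<in>B'. if t \<in> D b then h t else 0) = (\<Sum>t\<in>B' \<inter> D b. h t)"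
      using finB' by (simp add: sum.inter_restrict)
    also have "B' \<inter> D b = D b" using DB' by blast
    finally show ?thesis using False by simp
  qed
  have swap: "(\<Sum>t\<in>B'. q' t * h t) = (\<Sum>b\<in>B. q b * (\<Sum>t\<in>B'. wt b t * h t))" for h :: "'t \<Rightarrow> real"
  proof -
    have "(\<Sum>t\<in>B'. q' t * h t) = (\<Sum>t\<in>B'. \<Sum>b\<in>B. q b * (wt b t * h t))"
      unfolding q'_def by (intro sum.cong refl) (simp add: sum_distrib_right sum_distrib_left mult_ac)
    also have "\<dots> = (\<Sum>b\<in>B. \<Sum>t\<in>B'. q b * (wt b t * h t))" by (rule sum.swap)
    also have "\<dots> = (\<Sum>b\<in>B. q b * (\<Sum>t\<in>B'. wt b t * h t))" by (simp add: sum_distrib_left)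
    finally show ?thesis .
  qed
  have qnn: "0 \<le> q b" for b using fq by (simp add: fdist_def)
  have fq': "fdist B' q'"
  proof -
    have "(\<Sum>t\<in>B'. q' t) = (\<Sum>t\<in>B'. q' t * (\<lambda>_. 1) t)" by simp
    also have "\<dots> = (\<Sum>b\<in>B. q b * 1)"
    proof (subst swap, intro sum.cong refl)
      fix b assume b: "b \<in> B"
      have "(\<Sum>t\<in>B'. wt b t * 1) = 1"
      proof (cases "b \<in> Tf")
        case True thus ?thesis using H[OF b, of "\<lambda>_. 1"] by simp
      next
        case False
        hence "card (D b) = K" using D[of b] b BT by blast
        thus ?thesis using H[OF b, of "\<lambda>_. 1"] False Kpos by simp
      qed
      thus "q b * (\<Sum>t\<in>B'. wt b t * 1) = q b * 1" by simp
    qed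
    also have "\<dots> = 1" using fq by (simp add: fdist_def)
    finally have s1: "sum q' B' = 1" .
    have nn: "0 \<le> q' t" for t unfolding q'_def wt_def using qnn
      by (intro sum_nonneg mult_nonneg_nonneg) auto
    have z: "q' t = 0" if "t \<notin> B'" for t
      unfolding q'_def
    proof (intro sum.neutral ballI)
      fix b assume b: "b \<in> B"
      have "wt b t = 0"
      proof (cases "b \<in> Tf")
        case True thus ?thesis using that b by (auto simp: wt_def B'_def)
      next
        case False thus ?thesis using that b by (auto simp: wt_def B'_def)
      qed
      thus "q b * wt b t = 0" by simp
    qed
    show ?thesis using finB' s1 nn z by (simp add: fdist_def)
  qed
  have up': "(\<Sum>t\<in>B'. q' t * of_bool (\<pi> s t)) \<le> x + \<epsilon>" if s: "s \<in> S" for s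
  proof (cases "s \<in> F")
    case True
    have "(\<Sum>t\<in>B'. q' t * of_bool (\<pi> s t)) = (\<Sum>b\<in>B. q b * of_bool (\<pi> s b))"
    proof (subst swap, intro sum.cong refl)
      fix b assume b: "b \<in> B"
      have "(\<Sum>t\<in>B'. wt b t * of_bool (\<pi> s t)) = of_bool (\<pi> s b)"
      proof (cases "b \<in> Tf")
        case True2: True thus ?thesis using H[OF b] by simp
      next
        case False
        have Db: "D b \<subseteq> cls b" "card (D b) = K" using D[of b] b BT False by auto
        have "(\<Sum>t\<in>D b. of_bool (\<pi> s t)) = (\<Sum>t\<in>D b. (of_bool (\<pi> s b) :: real))"
        proof (intro sum.cong refl)
          fix t assume "t \<in> D b"
          hence "key t = key b" using Db by (auto simp: cls_def)
          hence "\<pi> s t = \<pi> s b" using True unfolding key_def by blast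
          thus "(of_bool (\<pi> s t) :: real) = of_bool (\<pi> s b)" by simp
        qed
        thus ?thesis using H[OF b, of "\<lambda>t. of_bool (\<pi> s t)"] False Db(2) Kpos by simp
      qed
      thus "q b * (\<Sum>t\<in>B'. wt b t * of_bool (\<pi> s t)) = q b * of_bool (\<pi> s b)" by simp
    qed
    also have "\<dots> \<le> x + \<epsilon> / 2" using up True by (auto simp: S0_def)
    finally show ?thesis using eps by simp
  next
    case False
    define r where "r = rp (pat s)"
    have r: "r \<in> S0" "pat r = pat s" using rp[OF s] by (auto simp: r_def S0_def)
    have "(\<Sum>t\<in>B'. q' t * of_bool (\<pi> s t)) \<le> (\<Sum>b\<in>B. q b * (of_bool (\<pi> r b) + real N / real K))"
    proof (subst swap, intro sum_mono mult_left_mono qnn)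
      fix b assume b: "b \<in> B"
      show "(\<Sum>t\<in>B'. wt b t * of_bool (\<pi> s t)) \<le> of_bool (\<pi> r b) + real N / real K"
      proof (cases "b \<in> Tf")
        case True
        hence "\<pi> s b = \<pi> r b" using r(2) unfolding pat_def by blast
        thus ?thesis using H[OF b] True by simp
      next
        case False2: False
        have Db: "D b \<subseteq> T" "finite (D b)" using D[of b] b BT False2 by (auto simp: cls_def)
        have "(\<Sum>t\<in>D b. (of_bool (\<pi> s t) :: real)) = real (card (D b \<inter> {t. \<pi> s t}))"
          using Db(2) by simp
        also have "card (D b \<inter> {t. \<pi> s t}) \<le> card {t\<in>T. \<pi> s t}"
          using O[OF s False] Db(1) by (intro card_mono) auto
        hence "real (card (D b \<inter> {t. \<pi> s t})) \<le> real N" using O[OF s False] by linarith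
        finally have "(\<Sum>t\<in>D b. (of_bool (\<pi> s t) :: real)) / real K \<le> real N / real K"
          by (intro divide_right_mono) auto
        thus ?thesis using H[OF b, of "\<lambda>t. of_bool (\<pi> s t)"] False2 by simp
      qed
    qed
    also have "\<dots> = (\<Sum>b\<in>B. q b * of_bool (\<pi> r b)) + real N / real K"
    proof -
      have "(\<Sum>b\<in>B. q b * (real N / real K)) = sum q B * (real N / real K)"
        by (rule sum_distrib_right[symmetric])
      also have "\<dots> = real N / real K" using fq by (simp add: fdist_def)
      finally have e: "(\<Sum>b\<in>B. q b * (real N / real K)) = real N / real K" .
      have "(\<Sum>b\<in>B. q b * (of_bool (\<pi> r b) + real N / real K))
          = (\<Sum>b\<in>B. q b * of_bool (\<pi> r b)) + (\<Sum>b\<in>B. q b * (real N / real K))"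
        by (simp only: distrib_left sum.distrib)
      thus ?thesis by (simp only: e)
    qed
    also have "\<dots> \<le> x + \<epsilon> / 2 + \<epsilon> / 2" using up[rule_format, OF r(1)] NK by linarith
    finally show ?thesis by simp
  qed
  show "\<exists>A p B q x. A \<subseteq> S \<and> fdist A p \<and> B \<subseteq> T \<and> fdist B q \<and>
     (\<forall>t\<in>T. x \<le> (\<Sum>s\<in>A. p s * of_bool (\<pi> s t))) \<and>
     (\<forall>s\<in>S. (\<Sum>t\<in>B. q t * of_bool (\<pi> s t)) \<le> x + \<epsilon>)"
    using S0S fp B'T fq' lo up' by blast
qed

lemma not_fin_card_mono:
  assumes "X' \<subseteq> X" "\<not> (finite X' \<and> card X' \<le> N)"
  shows "\<not> (finite X \<and> card X \<le> N)"
  using assms by (meson card_mono finite_subset order_trans)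

theorem corollary3p2:
  fixes S :: "'s set" and T :: "'t set" and \<pi> :: "'s \<Rightarrow> 't \<Rightarrow> bool"
  assumes "S \<noteq> {}" and "T \<noteq> {}"
  assumes "finite {s\<in>S. infinite {t\<in>T. \<not> \<pi> s t}}
    \<or> (\<exists>N::nat. finite {s\<in>S. \<not> (finite {t\<in>T. \<pi> s t} \<and> card {t\<in>T. \<pi> s t} \<le> N)})
    \<or> (\<exists>N::nat. finite {t\<in>T. \<not> (finite {s\<in>S. \<not> \<pi> s t} \<and> card {s\<in>S. \<not> \<pi> s t} \<le> N)})
    \<or> finite {t\<in>T. infinite {s\<in>S. \<pi> s t}}"
  shows "totally_minimax S T \<pi>"
  unfolding totally_minimax_def
proof (intro allI impI)
  fix S' T' assume sub: "S' \<subseteq> S" "T' \<subseteq> T" and ne: "S' \<noteq> {}" "T' \<noteq> {}"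
  show "minimax_property S' T' \<pi>"
  proof (rule bridge)
    from assms(3) show "approx_saddle S' T' \<pi>"
    proof (elim disjE exE)
      assume c: "finite {s\<in>S. infinite {t\<in>T. \<not> \<pi> s t}}"
      have "{s\<in>S'. infinite {t\<in>T'. \<not> \<pi> s t}} \<subseteq> {s\<in>S. infinite {t\<in>T. \<not> \<pi> s t}}"
      proof safe
        fix s assume "s \<in> S'" "infinite {t\<in>T'. \<not> \<pi> s t}"
        thus "s \<in> S" using sub by blast
        have "{t\<in>T'. \<not> \<pi> s t} \<subseteq> {t\<in>T. \<not> \<pi> s t}" using sub by blast
        thus False if "finite {t\<in>T. \<not> \<pi> s t}"
          using that \<open>infinite {t\<in>T'. \<not> \<pi> s t}\<close> finite_subset by blast
      qed
      hence "finite {s\<in>S'. infinite {t\<in>T'. \<not> \<pi> s t}}" using c by (rule finite_subset)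
      thus ?thesis by (rule case1[OF ne])
    next
      fix N :: nat
      assume c: "finite {s\<in>S. \<not> (finite {t\<in>T. \<pi> s t} \<and> card {t\<in>T. \<pi> s t} \<le> N)}"
      have "{s\<in>S'. \<not> (finite {t\<in>T'. \<pi> s t} \<and> card {t\<in>T'. \<pi> s t} \<le> N)}
          \<subseteq> {s\<in>S. \<not> (finite {t\<in>T. \<pi> s t} \<and> card {t\<in>T. \<pi> s t} \<le> N)}"
      proof
        fix s assume "s \<in> {s\<in>S'. \<not> (finite {t\<in>T'. \<pi> s t} \<and> card {t\<in>T'. \<pi> s t} \<le> N)}"
        hence s: "s \<in> S'" and np: "\<not> (finite {t\<in>T'. \<pi> s t} \<and> card {t\<in>T'. \<pi> s t} \<le> N)" by auto
        have "{t\<in>T'. \<pi> s t} \<subseteq> {t\<in>T. \<pi> s t}" using sub by blast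
        from not_fin_card_mono[OF this np]
        show "s \<in> {s\<in>S. \<not> (finite {t\<in>T. \<pi> s t} \<and> card {t\<in>T. \<pi> s t} \<le> N)}" using s sub by blast
      qed
      hence "finite {s\<in>S'. \<not> (finite {t\<in>T'. \<pi> s t} \<and> card {t\<in>T'. \<pi> s t} \<le> N)}"
        using c by (rule finite_subset)
      thus ?thesis by (rule case2[OF ne])
    next
      fix N :: nat
      assume c: "finite {t\<in>T. \<not> (finite {s\<in>S. \<not> \<pi> s t} \<and> card {s\<in>S. \<not> \<pi> s t} \<le> N)}"
      have "{t\<in>T'. \<not> (finite {s\<in>S'. \<not> \<pi> s t} \<and> card {s\<in>S'. \<not> \<pi> s t} \<le> N)}
          \<subseteq> {t\<in>T. \<not> (finite {s\<in>S. \<not> \<pi> s t} \<and> card {s\<in>S. \<not> \<pi> s t} \<le> N)}"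
      proof
        fix t assume "t \<in> {t\<in>T'. \<not> (finite {s\<in>S'. \<not> \<pi> s t} \<and> card {s\<in>S'. \<not> \<pi> s t} \<le> N)}"
        hence t: "t \<in> T'" and np: "\<not> (finite {s\<in>S'. \<not> \<pi> s t} \<and> card {s\<in>S'. \<not> \<pi> s t} \<le> N)" by auto
        have "{s\<in>S'. \<not> \<pi> s t} \<subseteq> {s\<in>S. \<not> \<pi> s t}" using sub by blast
        from not_fin_card_mono[OF this np]
        show "t \<in> {t\<in>T. \<not> (finite {s\<in>S. \<not> \<pi> s t} \<and> card {s\<in>S. \<not> \<pi> s t} \<le> N)}" using t sub by blast
      qed
      hence "finite {t\<in>T'. \<not> (finite {s\<in>S'. \<not> \<pi> s t} \<and> card {s\<in>S'. \<not> \<pi> s t} \<le> N)}"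
        using c by (rule finite_subset)
      hence "approx_saddle T' S' (\<lambda>t s. \<not> \<pi> s t)" by (intro case2[OF ne(2) ne(1)])
      thus ?thesis by (rule approx_saddle_transpose)
    next
      assume c: "finite {t\<in>T. infinite {s\<in>S. \<pi> s t}}"
      have "{t\<in>T'. infinite {s\<in>S'. \<pi> s t}} \<subseteq> {t\<in>T. infinite {s\<in>S. \<pi> s t}}"
      proof safe
        fix t assume "t \<in> T'" "infinite {s\<in>S'. \<pi> s t}"
        thus "t \<in> T" using sub by blast
        have "{s\<in>S'. \<pi> s t} \<subseteq> {s\<in>S. \<pi> s t}" using sub by blast
        thus False if "finite {s\<in>S. \<pi> s t}"
          using that \<open>infinite {s\<in>S'. \<pi> s t}\<close> finite_subset by blast
      qed
      hence "finite {t\<in>T'. infinite {s\<in>S'. \<pi> s t}}" using c by (rule finite_subset)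
      hence "finite {t\<in>T'. infinite {s\<in>S'. \<not> \<not> \<pi> s t}}" by simp
      hence "approx_saddle T' S' (\<lambda>t s. \<not> \<pi> s t)" by (intro case1[OF ne(2) ne(1)])
      thus ?thesis by (rule approx_saddle_transpose)
    qed
  qed
qed

end
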